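(* For every $n\geq1$ and every $i\in\{1,\dots,N\}$, $$C^{(n+1)}_{-i,i}\cdot v=G_i\, C^{(n)}_{ii}\cdot v-\lambda_i\,C^{(n)}_{-i,i}\cdot v-\sum_{k\in I,\ |k|>i}(-1)^{\bar k}\,C^{(n)}_{k,-k}\cdot v.$$
   Context: Let $N\geq1$, $I=\{-N,\dots,-1,1,\dots,N\}$, and for $k\in I$ put $\bar k=0$ if $k>0$, $\bar k=1$ if $k<0$. The Lie superalgebra $\mathfrak{q}(N)$ over $\mathbb{C}$ is spanned by elements $F_{ij}$ ($i,j\in I$) with $F_{-i,-j}=F_{ij}$ (realized as $F_{ij}=E_{ij}+E_{-i,-j}\in\mathfrak{gl}(N|N)$), $F_{ij}$ of parity $\bar\imath+\bar\jmath\bmod 2$, and supercommutator $$[F_{ij}, F_{kl}] = \delta_{kj} F_{il} - (-1)^{(\bar{\imath}+ \bar{\jmath})(\bar{k} + \bar{l})} \delta_{il} F_{kj} + \delta_{k,-j} F_{-i,l} - (-1)^{(\bar{\imath} + \bar{\jmath})(\bar{k} + \bar{l})} \delta_{-i,l} F_{k,-j}.$$ For $n\geq1$ define $C^{(n)}_{ij}\in U(\mathfrak{q}(N))$ by $$C^{(n)}_{ij} = \sum_{k_1,\ldots,k_{n-1}\in I}F_{ik_1} (-1)^{\bar{k}_1} F_{k_1k_2} (-1)^{\bar{k}_2} \cdots F_{k_{n-2}k_{n-1}} (-1)^{\bar{k}_{n-1}} F_{k_{n-1}j}$$ (so $C^{(1)}_{ij}=F_{ij}$). For $i>0$ let $G_i=F_{-i,i}$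 $(=F_{i,-i})$. Let $V$ be a representation of $\mathfrak{q}(N)$ and $v\in V$ a vector such that $F_{ij}\cdot v=0$ whenever $|i|<|j|$, and $F_{ii}\cdot v=\lambda_i v$ for $i=1,\dots,N$, where $\lambda_1,\dots,\lambda_N\in\mathbb{C}$. *)

theory Defs
  imports Complex_Main
begin

definition idx :: "nat \<Rightarrow> int set" where
  "idx N = {- int N .. int N} - {0}"

definition par :: "int \<Rightarrow> nat" where
  "par k = (if k < 0 then 1 else 0)"

text \<open>A representation of q(N) on a complex vector space V (given by the scalar
  multiplication scale): linear operators rho i j (the action of F_ij) satisfying
  F_{-i,-j} = F_ij and the supercommutator relations of q(N). This is the same as
  a module over the universal enveloping algebra U(q(N)).\<close>
definition qN_rep :: "nat \<Rightarrow> (complex \<Rightarrow> 'v::ab_group_add \<Rightarrow> 'v) \<Rightarrow> (int \<Rightarrow> int \<Rightarrow> 'v \<Rightarrow> 'v) \<Rightarrow> bool" where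
  "qN_rep N scale rho \<longleftrightarrow>
     vector_space scale \<and>
     (\<forall>i\<in>idx N. \<forall>j\<in>idx N. Vector_Spaces.linear scale scale (rho i j)) \<and>
     (\<forall>i\<in>idx N. \<forall>j\<in>idx N. rho (-i) (-j) = rho i j) \<and>
     (\<forall>i\<in>idx N. \<forall>j\<in>idx N. \<forall>k\<in>idx N. \<forall>l\<in>idx N. \<forall>w.
        (let s = ((-1::complex) ^ ((par i + par j) * (par k + par l))) in
         rho i j (rho k l w) - scale s (rho k l (rho i j w)) =
           (if k = j then rho i l w else 0)
           - scale s (if i = l then rho k j w else 0)
           + (if k = - j then rho (- i) l w else 0)
           - scale s (if - i = l then rho k (- j) w else 0)))"

text \<open>Action of C^{(n)}_{ij} on a vector, for n \<ge> 1:
  C^{(1)}_{ij} = F_ij and C^{(n+1)}_{ij} = \<Sum>_{k\<in>I} F_{ik} (-1)^{bar k} C^{(n)}_{kj}.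
  The value at n = 0 is an unused dummy.\<close>
fun Cact :: "nat \<Rightarrow> (complex \<Rightarrow> 'v::ab_group_add \<Rightarrow> 'v) \<Rightarrow> (int \<Rightarrow> int \<Rightarrow> 'v \<Rightarrow> 'v)
              \<Rightarrow> nat \<Rightarrow> int \<Rightarrow> int \<Rightarrow> 'v \<Rightarrow> 'v" where
  "Cact N scale rho 0 i j w = 0"
| "Cact N scale rho (Suc 0) i j w = rho i j w"
| "Cact N scale rho (Suc (Suc n)) i j w =
     (\<Sum>k\<in>idx N. rho i k (scale ((-1) ^ par k) (Cact N scale rho (Suc n) k j w)))"

end

theory Submission imports Defs begin

definition J :: "int \<Rightarrow> complex" where "J k = (-1) ^ par k"
definition sg :: "int \<Rightarrow> int \<Rightarrow> int \<Rightarrow> int \<Rightarrow> complex" where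
  "sg a b c d = (-1) ^ ((par a + par b) * (par c + par d))"

lemma idx_finite[simp]: "finite (idx N)" by (simp add: idx_def)
lemma idx_neg: "k \<in> idx N \<Longrightarrow> - k \<in> idx N" by (auto simp: idx_def)
lemma idx_nz: "k \<in> idx N \<Longrightarrow> k \<noteq> 0" by (auto simp: idx_def)

lemma sg_mult: "sg a b c k * sg a b k d = sg a b c d"
  unfolding sg_def par_def
  by (cases "a<0"; cases "b<0"; cases "c<0"; cases "k<0"; cases "d<0") simp_all

lemma sg_J1: "sg a b c a * J a = sg a b c b * J b"
  unfolding sg_def J_def par_def
  by (cases "a<0"; cases "b<0"; cases "c<0") simp_all

lemma sg_J2: "a \<noteq> 0 \<Longrightarrow> b \<noteq> 0 \<Longrightarrow> sg a b c (-a) * J (-a) = sg a b c (-b) * J (-b)"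
  unfolding sg_def J_def par_def
  by (cases "a<0"; cases "b<0"; cases "c<0") simp_all

lemma J_neg: "k \<noteq> 0 \<Longrightarrow> J (-k) = - J k"
  unfolding J_def par_def by auto

lemma sum_J_zero: "(\<Sum>k\<in>{k\<in>idx N. \<bar>k\<bar> > i}. J k) = 0"
proof -
  let ?S = "{k\<in>idx N. \<bar>k\<bar> > i}"
  have "(\<Sum>k\<in>?S. J k) = (\<Sum>k\<in>?S. J (- k))"
    by (rule sum.reindex_bij_witness[of _ uminus uminus]) (auto simp: idx_def)
  also have "\<dots> = (\<Sum>k\<in>?S. - J k)"
    by (rule sum.cong) (auto simp: J_neg idx_nz)
  also have "\<dots> = - (\<Sum>k\<in>?S. J k)"
    by (simp add: sum_negf)
  finally show ?thesis by simp
qed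


context
  fixes N :: nat and scale :: "complex \<Rightarrow> 'v::ab_group_add \<Rightarrow> 'v"
    and rho :: "int \<Rightarrow> int \<Rightarrow> 'v \<Rightarrow> 'v"
  assumes R: "qN_rep N scale rho"
begin

lemmas R' = R[unfolded qN_rep_def]

interpretation vs: vector_space scale
  by (rule conjunct1[OF R'])

lemma rho_lin: "a \<in> idx N \<Longrightarrow> b \<in> idx N \<Longrightarrow> Vector_Spaces.linear scale scale (rho a b)"
  using conjunct1[OF conjunct2[OF R']] by blast

lemma rho_add: "a \<in> idx N \<Longrightarrow> b \<in> idx N \<Longrightarrow> rho a b (x + y) = rho a b x + rho a b y"
  using rho_lin[unfolded Vector_Spaces.linear_iff] by simp

lemma rho_scale: "a \<in> idx N \<Longrightarrow> b \<in> idx N \<Longrightarrow> rho a b (scale c x) = scale c (rho a b x)"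
  using rho_lin[unfolded Vector_Spaces.linear_iff] by simp

lemma rho_zero: "a \<in> idx N \<Longrightarrow> b \<in> idx N \<Longrightarrow> rho a b 0 = 0"
  and rho_diff: "a \<in> idx N \<Longrightarrow> b \<in> idx N \<Longrightarrow> rho a b (x - y) = rho a b x - rho a b y"
  and rho_sum: "a \<in> idx N \<Longrightarrow> b \<in> idx N \<Longrightarrow> rho a b (sum f S) = (\<Sum>k\<in>S. rho a b (f k))"
proof -
  assume "a \<in> idx N" "b \<in> idx N"
  then interpret additive "rho a b" by unfold_locales (simp add: rho_add)
  show "rho a b 0 = 0" by (rule zero)
  show "rho a b (x - y) = rho a b x - rho a b y" by (rule diff)
  show "rho a b (sum f S) = (\<Sum>k\<in>S. rho a b (f k))" by (rule sum)
qed

lemma rho_uminus: "a \<in> idx N \<Longrightarrow> b \<in> idx N \<Longrightarrow> rho a b (- x) = - rho a b x"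
  using rho_diff[of a b 0 x] rho_zero[of a b] by simp

lemma rho_neg: "rho (-a) (-b) = rho a b" if "a \<in> idx N" "b \<in> idx N"
  using conjunct1[OF conjunct2[OF conjunct2[OF R']]] that by blast

lemma rho_rel:
  assumes "a \<in> idx N" "b \<in> idx N" "c \<in> idx N" "d \<in> idx N"
  shows "rho a b (rho c d w) = scale (sg a b c d) (rho c d (rho a b w)) +
     ((if c = b then rho a d w else 0)
           - scale (sg a b c d) (if a = d then rho c b w else 0)
           + (if c = - b then rho (- a) d w else 0)
           - scale (sg a b c d) (if - a = d then rho c (- b) w else 0))"
proof -
  have "rho a b (rho c d w) - scale (sg a b c d) (rho c d (rho a b w)) =
     ((if c = b then rho a d w else 0)
           - scale (sg a b c d) (if a = d then rho c b w else 0)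
           + (if c = - b then rho (- a) d w else 0)
           - scale (sg a b c d) (if - a = d then rho c (- b) w else 0))"
  proof -
    have H: "\<forall>i\<in>idx N. \<forall>j\<in>idx N. \<forall>k\<in>idx N. \<forall>l\<in>idx N. \<forall>w.
        (let s = ((-1::complex) ^ ((par i + par j) * (par k + par l))) in
         rho i j (rho k l w) - scale s (rho k l (rho i j w)) =
           (if k = j then rho i l w else 0)
           - scale s (if i = l then rho k j w else 0)
           + (if k = - j then rho (- i) l w else 0)
           - scale s (if - i = l then rho k (- j) w else 0))"
      by (rule conjunct2[OF conjunct2[OF conjunct2[OF R']]])
    show ?thesis using H[rule_format, OF assms, of w] unfolding sg_def Let_def .
  qed
  then show ?thesis by (simp add: algebra_simps)
qed

abbreviation "C n \<equiv> Cact N scale rho n"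

lemma C_scale: "c \<in> idx N \<Longrightarrow> d \<in> idx N \<Longrightarrow> C (Suc n) c d (scale x w) = scale x (C (Suc n) c d w)"
proof (induction n arbitrary: c d)
  case 0
  then show ?case by (simp add: rho_scale)
next
  case (Suc n)
  have "C (Suc (Suc n)) c d (scale x w) = (\<Sum>k\<in>idx N. rho c k (scale ((-1) ^ par k) (C (Suc n) k d (scale x w))))"
    by simp
  also have "\<dots> = (\<Sum>k\<in>idx N. scale x (rho c k (scale ((-1) ^ par k) (C (Suc n) k d w))))"
  proof (rule sum.cong)
    fix k assume k: "k \<in> idx N"
    have "rho c k (scale ((-1) ^ par k) (C (Suc n) k d (scale x w)))
        = rho c k (scale ((-1) ^ par k) (scale x (C (Suc n) k d w)))"
      using Suc.IH[OF k Suc.prems(2)] by simp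
    also have "\<dots> = scale x (rho c k (scale ((-1) ^ par k) (C (Suc n) k d w)))"
      using k Suc.prems by (simp add: rho_scale vs.scale_left_commute[of x])
    finally show "rho c k (scale ((-1) ^ par k) (C (Suc n) k d (scale x w)))
        = scale x (rho c k (scale ((-1) ^ par k) (C (Suc n) k d w)))" .
  qed simp
  also have "\<dots> = scale x (C (Suc (Suc n)) c d w)"
    by (simp add: vs.scale_sum_right)
  finally show ?case .
qed

lemma C_zero: "c \<in> idx N \<Longrightarrow> d \<in> idx N \<Longrightarrow> C (Suc n) c d 0 = 0"
  using C_scale[of c d n 0 0] by simp

lemma scale_if: "scale x (if P then y else 0) = (if P then scale x y else 0)"
  by simp

lemma rho_if: "c \<in> idx N \<Longrightarrow> k \<in> idx N \<Longrightarrow> rho c k (if P then y else 0) = (if P then rho c k y else 0)"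
  by (simp add: rho_zero)

lemma D_unfold: "C (Suc (Suc n)) c d w = (\<Sum>k\<in>idx N. rho c k (scale (J k) (C (Suc n) k d w)))"
  by (simp add: J_def)

lemma sum_if_const: "(\<Sum>k\<in>S. (if P then f k else 0)) = (if P then (\<Sum>k\<in>S. f k) else 0)"
  by simp

lemma comm:
  assumes a: "a \<in> idx N" and b: "b \<in> idx N"
  shows "c \<in> idx N \<Longrightarrow> d \<in> idx N \<Longrightarrow>
    rho a b (C (Suc n) c d w) = scale (sg a b c d) (C (Suc n) c d (rho a b w)) +
     ((if c = b then C (Suc n) a d w else 0)
           - scale (sg a b c d) (if a = d then C (Suc n) c b w else 0)
           + (if c = - b then C (Suc n) (- a) d w else 0)
           - scale (sg a b c d) (if - a = d then C (Suc n) c (- b) w else 0))"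
proof (induction n arbitrary: c d w)
  case 0
  then show ?case using rho_rel[OF a b, of c d w] by simp
next
  case (Suc n)
  note c = Suc.prems(1) and d = Suc.prems(2)
  have na: "-a \<in> idx N" and nb: "-b \<in> idx N" using a b by (auto intro: idx_neg)
  have anz: "a \<noteq> 0" and bnz: "b \<noteq> 0" using a b by (auto dest: idx_nz)
  define C' where "C' = C (Suc n)"
  define D where "D = C (Suc (Suc n))"
  define \<sigma> where "\<sigma> = sg a b c d"
  define X where "X k = scale (J k) (C' k d w)" for k
  define R2 where "R2 k = (if k = b then C' a d w else 0) - scale (sg a b k d) (if a = d then C' k b w else 0)
      + (if k = -b then C' (-a) d w else 0) - scale (sg a b k d) (if -a = d then C' k (-b) w else 0)" for k
  define Rel where "Rel k = (if c = b then rho a k (X k) else 0) - scale (sg a b c k) (if a = k then rho c b (X k) else 0)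
      + (if c = -b then rho (-a) k (X k) else 0) - scale (sg a b c k) (if -a = k then rho c (-b) (X k) else 0)" for k
  define B where "B k = scale (sg a b c k * J k) (rho c k (R2 k))" for k
  have IH: "rho a b (C' k d' w') = scale (sg a b k d') (C' k d' (rho a b w')) +
     ((if k = b then C' a d' w' else 0)
           - scale (sg a b k d') (if a = d' then C' k b w' else 0)
           + (if k = - b then C' (- a) d' w' else 0)
           - scale (sg a b k d') (if - a = d' then C' k (- b) w' else 0))"
    if "k \<in> idx N" "d' \<in> idx N" for k d' w'
    using Suc.IH[OF that] unfolding C'_def .
  have Dk: "D x y u = (\<Sum>k\<in>idx N. rho x k (scale (J k) (C' k y u)))" for x y u
    unfolding D_def C'_def by (rule D_unfold)
  have pt: "rho a b (rho c k (X k)) = scale \<sigma> (rho c k (scale (J k) (C' k d (rho a b w)))) + (B k + Rel k)"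
    if k: "k \<in> idx N" for k
  proof -
    have e1: "rho a b (rho c k (X k)) = scale (sg a b c k) (rho c k (rho a b (X k))) + Rel k"
      using rho_rel[OF a b c k, of "X k"] unfolding Rel_def by simp
    have e2: "rho a b (X k) = scale (J k) (scale (sg a b k d) (C' k d (rho a b w)) + R2 k)"
      unfolding X_def using IH[OF k d, of w] by (simp add: rho_scale[OF a b] R2_def)
    have e3: "rho c k (rho a b (X k)) = scale (J k * sg a b k d) (rho c k (C' k d (rho a b w))) + scale (J k) (rho c k (R2 k))"
      unfolding e2 by (simp add: rho_add[OF c k] rho_scale[OF c k] vs.scale_right_distrib)
    have e4: "sg a b c k * (J k * sg a b k d) = \<sigma> * J k"
      using sg_mult[of a b c k d] unfolding \<sigma>_def by (simp add: algebra_simps)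
    show ?thesis unfolding e1 e3 B_def
      by (simp add: vs.scale_right_distrib rho_scale[OF c k] e4 algebra_simps sg_mult \<sigma>_def)
  qed
  have s1: "rho a b (D c d w) = scale \<sigma> (D c d (rho a b w)) + ((\<Sum>k\<in>idx N. B k) + (\<Sum>k\<in>idx N. Rel k))"
  proof -
    have "rho a b (D c d w) = (\<Sum>k\<in>idx N. rho a b (rho c k (X k)))"
      unfolding Dk X_def by (simp add: rho_sum[OF a b])
    also have "\<dots> = (\<Sum>k\<in>idx N. scale \<sigma> (rho c k (scale (J k) (C' k d (rho a b w)))) + (B k + Rel k))"
      by (rule sum.cong) (simp_all add: pt)
    also have "\<dots> = scale \<sigma> (D c d (rho a b w)) + ((\<Sum>k\<in>idx N. B k) + (\<Sum>k\<in>idx N. Rel k))"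
      unfolding Dk by (simp add: sum.distrib vs.scale_sum_right)
    finally show ?thesis .
  qed
  have sRel: "(\<Sum>k\<in>idx N. Rel k) = (if c = b then D a d w else 0) - scale (sg a b c a * J a) (rho c b (C' a d w))
      + (if c = -b then D (-a) d w else 0) - scale (sg a b c (-a) * J (-a)) (rho c (-b) (C' (-a) d w))"
  proof -
    have "(\<Sum>k\<in>idx N. Rel k) = (\<Sum>k\<in>idx N. (if c = b then rho a k (X k) else 0))
       - (\<Sum>k\<in>idx N. (if a = k then scale (sg a b c k) (rho c b (X k)) else 0))
       + (\<Sum>k\<in>idx N. (if c = -b then rho (-a) k (X k) else 0))
       - (\<Sum>k\<in>idx N. (if -a = k then scale (sg a b c k) (rho c (-b) (X k)) else 0))"
      unfolding Rel_def by (simp add: sum.distrib sum_subtractf scale_if del: vs.scale_eq_0_iff)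
    also have "\<dots> = (if c = b then D a d w else 0) - scale (sg a b c a) (rho c b (X a))
      + (if c = -b then D (-a) d w else 0) - scale (sg a b c (-a)) (rho c (-b) (X (-a)))"
      unfolding sum_if_const Dk X_def using a na by simp
    also have "\<dots> = (if c = b then D a d w else 0) - scale (sg a b c a * J a) (rho c b (C' a d w))
      + (if c = -b then D (-a) d w else 0) - scale (sg a b c (-a) * J (-a)) (rho c (-b) (C' (-a) d w))"
      unfolding X_def by (simp add: rho_scale[OF c b] rho_scale[OF c nb])
    finally show ?thesis .
  qed
  have sB: "(\<Sum>k\<in>idx N. B k) = scale (sg a b c b * J b) (rho c b (C' a d w)) - (if a = d then scale \<sigma> (D c b w) else 0)
      + scale (sg a b c (-b) * J (-b)) (rho c (-b) (C' (-a) d w)) - (if -a = d then scale \<sigma> (D c (-b) w) else 0)"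
  proof -
    have Bk: "B k = (if k = b then scale (sg a b c b * J b) (rho c b (C' a d w)) else 0)
       - (if a = d then scale \<sigma> (rho c k (scale (J k) (C' k b w))) else 0)
       + (if k = -b then scale (sg a b c (-b) * J (-b)) (rho c (-b) (C' (-a) d w)) else 0)
       - (if -a = d then scale \<sigma> (rho c k (scale (J k) (C' k (-b) w))) else 0)" if k: "k \<in> idx N" for k
    proof -
      have e4: "sg a b c k * J k * sg a b k d = \<sigma> * J k"
        using sg_mult[of a b c k d] unfolding \<sigma>_def by (simp add: algebra_simps)
      show ?thesis unfolding B_def R2_def
        by (simp add: rho_add[OF c k] rho_diff[OF c k] rho_scale[OF c k] rho_if[OF c k]
            vs.scale_right_distrib vs.scale_right_diff_distrib scale_if e4 sg_mult \<sigma>_def bnz rho_scale[OF c nb] rho_scale[OF c b] del: vs.scale_eq_0_iff)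
    qed
    have "(\<Sum>k\<in>idx N. B k) = (\<Sum>k\<in>idx N. (if k = b then scale (sg a b c b * J b) (rho c b (C' a d w)) else 0))
       - (\<Sum>k\<in>idx N. (if a = d then scale \<sigma> (rho c k (scale (J k) (C' k b w))) else 0))
       + (\<Sum>k\<in>idx N. (if k = -b then scale (sg a b c (-b) * J (-b)) (rho c (-b) (C' (-a) d w)) else 0))
       - (\<Sum>k\<in>idx N. (if -a = d then scale \<sigma> (rho c k (scale (J k) (C' k (-b) w))) else 0))"
      by (simp add: Bk sum.distrib sum_subtractf del: vs.scale_eq_0_iff)
    also have "\<dots> = scale (sg a b c b * J b) (rho c b (C' a d w)) - (if a = d then scale \<sigma> (D c b w) else 0)
      + scale (sg a b c (-b) * J (-b)) (rho c (-b) (C' (-a) d w)) - (if -a = d then scale \<sigma> (D c (-b) w) else 0)"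
      unfolding sum_if_const Dk using b nb by (simp add: vs.scale_sum_right)
    finally show ?thesis .
  qed
  have j1: "sg a b c a * J a = sg a b c b * J b" by (rule sg_J1)
  have j2: "sg a b c (-a) * J (-a) = sg a b c (-b) * J (-b)" by (rule sg_J2[OF anz bnz])
  show ?case
    unfolding D_def[symmetric] \<sigma>_def[symmetric] C'_def[symmetric]
    unfolding s1 sRel sB j1 j2 by (simp add: algebra_simps)
qed

lemma vanish:
  assumes hv: "\<And>a b. a \<in> idx N \<Longrightarrow> b \<in> idx N \<Longrightarrow> \<bar>a\<bar> < \<bar>b\<bar> \<Longrightarrow> rho a b v = 0"
  shows "k \<in> idx N \<Longrightarrow> l \<in> idx N \<Longrightarrow> \<bar>k\<bar> < \<bar>l\<bar> \<Longrightarrow> C (Suc n) k l v = 0"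
proof (induction n arbitrary: k l)
  case 0
  then show ?case using hv by simp
next
  case (Suc n)
  note k = Suc.prems(1) and l = Suc.prems(2) and kl = Suc.prems(3)
  have "C (Suc (Suc n)) k l v = (\<Sum>m\<in>idx N. rho k m (scale (J m) (C (Suc n) m l v)))"
    by (rule D_unfold)
  also have "\<dots> = (\<Sum>m\<in>idx N. 0)"
  proof (rule sum.cong[OF refl])
    fix m assume m: "m \<in> idx N"
    show "rho k m (scale (J m) (C (Suc n) m l v)) = 0"
    proof (cases "\<bar>m\<bar> < \<bar>l\<bar>")
      case True
      then show ?thesis using Suc.IH[OF m l True] by (simp add: rho_zero[OF k m])
    next
      case False
      have mnz: "m \<noteq> 0" using m by (rule idx_nz)
      have "rho k m v = 0" using hv[OF k m] kl False by simp
      then have "rho k m (C (Suc n) m l v) = 0"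
        using comm[OF k m m l, of n v] Suc.IH[OF k l kl] kl mnz C_zero[OF m l]
        by auto
      then show ?thesis by (simp add: rho_scale[OF k m])
    qed
  qed
  finally show ?case by simp
qed

lemma if_diff0: "(if P then (x::'a::ab_group_add) - y else 0) = (if P then x else 0) - (if P then y else 0)"
  by simp

lemma sg_special: "0 < i \<Longrightarrow> sg (-i) k k i = 1"
  unfolding sg_def par_def by (cases "k < 0") simp_all

lemma main:
  assumes hv: "\<And>a b. a \<in> idx N \<Longrightarrow> b \<in> idx N \<Longrightarrow> \<bar>a\<bar> < \<bar>b\<bar> \<Longrightarrow> rho a b v = 0"
    and hl: "\<And>a. 1 \<le> a \<Longrightarrow> a \<le> int N \<Longrightarrow> rho a a v = scale (lam a) v"
    and i1: "1 \<le> i" and iN: "i \<le> int N"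
  shows "C (Suc (Suc m)) (- i) i v =
           rho (- i) i (C (Suc m) i i v)
           - scale (lam i) (C (Suc m) (- i) i v)
           - (\<Sum>k\<in>{k\<in>idx N. \<bar>k\<bar> > i}. scale ((-1) ^ par k) (C (Suc m) k (- k) v))"
proof -
  define C' where "C' = C (Suc m)"
  have i: "i \<in> idx N" and ni: "-i \<in> idx N" using i1 iN by (auto simp: idx_def)
  have Ji: "J i = 1" and Jni: "J (-i) = -1" using i1 by (auto simp: J_def par_def)
  define T where "T k = (if k = i then rho (- i) i (C' i i v) else 0)
      - (if k = - i then scale (lam i) (C' (- i) i v) else 0)
      + (if \<bar>k\<bar> > i then scale (J k) (C' (- i) i v) - scale (J k) (C' k (- k) v) else 0)" for k
  have pt: "rho (- i) k (scale (J k) (C' k i v)) = T k" if k: "k \<in> idx N" for k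
  proof -
    consider "k = i" | "k = - i" | "\<bar>k\<bar> < i" | "\<bar>k\<bar> > i" by linarith
    then show ?thesis
    proof cases
      case 1
      then show ?thesis using i1 by (simp add: T_def Ji)
    next
      case 2
      have "rho i i (C' (- i) i v) = scale (lam i) (C' (- i) i v)"
        using comm[OF i i ni i, of m v] hl[OF i1 iN] C_scale[OF ni i] i1
        unfolding C'_def by (simp add: sg_def)
      then show ?thesis using 2 i1 rho_neg[OF i i]
        by (simp add: T_def Jni rho_scale[OF ni ni] rho_uminus[OF i i])
    next
      case 3
      have "C' k i v = 0" unfolding C'_def using vanish[OF hv k i] 3 i1 by simp
      moreover have "k \<noteq> i" "k \<noteq> - i" using 3 by auto
      ultimately show ?thesis using 3 by (simp add: T_def rho_zero[OF ni k])
    next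
      case 4
      have knz: "k \<noteq> 0" using k by (rule idx_nz)
      have "rho (- i) k v = 0" using hv[OF ni k] 4 i1 by simp
      then have "rho (- i) k (C' k i v) = C' (- i) i v - C' k (- k) v"
        using comm[OF ni k k i, of m v] C_zero[OF k i] sg_special[of i k] i1 knz 4
        unfolding C'_def by auto
      moreover have "k \<noteq> i" "k \<noteq> - i" using 4 i1 by auto
      ultimately show ?thesis using 4 i1 by (simp add: T_def rho_scale[OF ni k] vs.scale_right_diff_distrib)
    qed
  qed
  let ?S = "{k\<in>idx N. \<bar>k\<bar> > i}"
  have "C (Suc (Suc m)) (- i) i v = (\<Sum>k\<in>idx N. T k)"
    unfolding D_unfold C'_def[symmetric] by (rule sum.cong) (simp_all add: pt)
  also have "\<dots> = rho (- i) i (C' i i v) - scale (lam i) (C' (- i) i v)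
      + ((\<Sum>k\<in>?S. scale (J k) (C' (- i) i v)) - (\<Sum>k\<in>?S. scale (J k) (C' k (- k) v)))"
    unfolding T_def using i ni
    by (simp add: if_diff0 sum.distrib sum_subtractf sum.inter_filter del: vs.scale_eq_0_iff)
  also have "(\<Sum>k\<in>?S. scale (J k) (C' (- i) i v)) = 0"
    by (simp add: vs.scale_sum_left[symmetric] sum_J_zero)
  finally show ?thesis unfolding C'_def J_def by simp
qed

end

theorem mainTheorem7:
  fixes N :: nat and scale :: "complex \<Rightarrow> 'v::ab_group_add \<Rightarrow> 'v"
    and rho :: "int \<Rightarrow> int \<Rightarrow> 'v \<Rightarrow> 'v" and v :: 'v and lam :: "int \<Rightarrow> complex"
    and n :: nat and i :: int
  assumes "N \<ge> 1"
    and "qN_rep N scale rho"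
    and "\<And>a b. a \<in> idx N \<Longrightarrow> b \<in> idx N \<Longrightarrow> \<bar>a\<bar> < \<bar>b\<bar> \<Longrightarrow> rho a b v = 0"
    and "\<And>a. 1 \<le> a \<Longrightarrow> a \<le> int N \<Longrightarrow> rho a a v = scale (lam a) v"
    and "n \<ge> 1"
    and "1 \<le> i" and "i \<le> int N"
  shows "Cact N scale rho (n + 1) (- i) i v =
           rho (- i) i (Cact N scale rho n i i v)
           - scale (lam i) (Cact N scale rho n (- i) i v)
           - (\<Sum>k\<in>{k\<in>idx N. \<bar>k\<bar> > i}. scale ((-1) ^ par k) (Cact N scale rho n k (- k) v))"
proof -
  obtain m where n: "n = Suc m" using assms(5) by (cases n) auto
  show ?thesis
    unfolding n using main[OF assms(2) assms(3) assms(4) assms(6) assms(7), of m] by simp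
qed

end
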